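(* Let $\tau=\lfloor \zeta/(w-1)\rfloor+1$. There exists a constant $C>0$ such that for every $\sigma>(1-2^{-w\tau})^{1/\tau}$, every integer $t\ge 0$ and every initial state $s_0\in[-\zeta,\zeta]\cap\mathbb Z$ of the absorbing system, $\mathbb P(H_t)\le C\sigma^t$.
   Context: Fix a positive integer $\zeta$, integers $w_k$ ($k\in\mathbb Z$) and an integer $w>1$ with $w_k\ge w$ for all $k$, and a policy $\pi:\mathbb Z\to\{-1,0,1\}$. On a probability space $(\Omega,\Sigma,\mathbb P)$ let $\eta_t(k)\sim\mathrm{Bin}(w_k,\tfrac12)$ be independent random variables ($t\in\mathbb N\cup\{0\}$, $k\in\mathbb Z$) and set $W_t(k)=2\eta_t(k)-w_k$. The "absorbing system" has state space $\{-\zeta,\dots,\zeta\}\cup\{s_*\}$, where $s_*$ is an extra absorbing state: $S_0=s_0\in[-\zeta,\zeta]\cap\mathbb Z$, and $S_{t+1}=S_t+\pi(S_t)+W_t(S_t)$ if $S_t\in[-\zeta,\zeta]$ and $|S_t+\pi(S_t)+W_t(S_t)|\le\zeta$, while $S_{t+1}=s_*$ otherwise. $H_t$ denotes the survival event $\{S_t\ne s_*\}$. *)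

theory Defs
  imports "HOL-Probability.Probability"
begin

text \<open>The state is an option: None is the absorbing
state s_*, Some s a state in [-zeta, zeta].  eta t k omega is the random
variable eta_t(k), wk k is w_k, pol is the policy pi.  Then
W_t(k) = 2 eta_t(k) - w_k.\<close>

primrec absS :: "int \<Rightarrow> (int \<Rightarrow> int) \<Rightarrow> (int \<Rightarrow> int) \<Rightarrow> (nat \<Rightarrow> int \<Rightarrow> 'a \<Rightarrow> nat)
                 \<Rightarrow> int \<Rightarrow> nat \<Rightarrow> 'a \<Rightarrow> int option" where
  "absS zeta wk pol eta s0 0 \<omega> = Some s0"
| "absS zeta wk pol eta s0 (Suc t) \<omega> =
     (case absS zeta wk pol eta s0 t \<omega> of
        None \<Rightarrow> None
      | Some s \<Rightarrow>
          (let s' = s + pol s + (2 * int (eta t s \<omega>) - wk s)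
           in if \<bar>s\<bar> \<le> zeta \<and> \<bar>s'\<bar> \<le> zeta then Some s' else None))"

end

theory Submission
  imports Defs
begin


definition Tn :: "nat \<Rightarrow> int \<Rightarrow> real" where
  "Tn n j = (\<Sum>h\<le>n. if int n + j \<le> 2 * int h then real (n choose h) else 0)"

lemma Tn_Suc:
  assumes "j \<ge> 0"
  shows "Tn (Suc n) j = Tn n (j + 1) + Tn n (j - 1)"
proof -
  have "Tn (Suc n) j = (\<Sum>h\<le>n. if int (Suc n) + j \<le> 2 * int (Suc h) then real (Suc n choose Suc h) else 0)"
    unfolding Tn_def using assms by (subst sum.atMost_Suc_shift) simp
  also have "\<dots> = (\<Sum>h\<le>n. (if int n + (j - 1) \<le> 2 * int h then real (n choose h) else 0)
                    + (if int n + (j + 1) \<le> 2 * int (Suc h) then real (n choose Suc h) else 0))"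
    by (intro sum.cong refl) auto
  also have "\<dots> = Tn n (j - 1) + (\<Sum>h\<le>n. if int n + (j + 1) \<le> 2 * int (Suc h) then real (n choose Suc h) else 0)"
    unfolding Tn_def by (simp add: sum.distrib)
  also have "(\<Sum>h\<le>n. if int n + (j + 1) \<le> 2 * int (Suc h) then real (n choose Suc h) else 0) = Tn n (j+1)"
  proof -
    have "Tn n (j+1) = (\<Sum>h\<le>Suc n. if int n + (j+1) \<le> 2 * int h then real (n choose h) else 0)"
      unfolding Tn_def by simp
    also have "\<dots> = (\<Sum>h\<le>n. if int n + (j + 1) \<le> 2 * int (Suc h) then real (n choose Suc h) else 0)"
      using assms by (subst sum.atMost_Suc_shift) simp
    finally show ?thesis by simp
  qed
  finally show ?thesis by simp
qed

lemma Tn_0: "2 ^ n \<le> 2 * Tn n 0"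
proof -
  have s1: "(\<Sum>h\<le>n. real (n choose h)) = 2 ^ n"
  proof -
    have "(\<Sum>h\<le>n. (n choose h)) = 2 ^ n" using choose_row_sum by simp
    then have "real (\<Sum>h\<le>n. (n choose h)) = 2 ^ n" by simp
    then show ?thesis by (simp only: of_nat_sum)
  qed
  have rev: "(\<Sum>h\<le>n. if 2 * int h \<le> int n then real (n choose h) else 0) = Tn n 0"
  proof -
    have "(\<Sum>h\<le>n. if 2 * int h \<le> int n then real (n choose h) else 0)
        = (\<Sum>h=0..n. if 2 * int h \<le> int n then real (n choose h) else 0)"
      by (simp add: atLeast0AtMost)
    also have "\<dots> = (\<Sum>h=0..n. if 2 * int (n + 0 - h) \<le> int n then real (n choose (n + 0 - h)) else 0)"
      by (rule sum.atLeastAtMost_rev)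
    also have "\<dots> = (\<Sum>h=0..n. if int n + 0 \<le> 2 * int h then real (n choose h) else 0)"
      by (intro sum.cong refl) (auto simp: binomial_symmetric[symmetric] of_nat_diff)
    finally show ?thesis by (simp add: Tn_def atLeast0AtMost)
  qed
  have "(\<Sum>h\<le>n. real (n choose h)) \<le> (\<Sum>h\<le>n. (if int n + 0 \<le> 2 * int h then real (n choose h) else 0)
            + (if 2 * int h \<le> int n then real (n choose h) else 0))"
    by (intro sum_mono) auto
  also have "\<dots> = 2 * Tn n 0" using rev by (simp add: sum.distrib Tn_def)
  finally show ?thesis using s1 by simp
qed

lemma Tn_tail: "0 \<le> j \<Longrightarrow> j \<le> int n \<Longrightarrow> 2 ^ n \<le> 2 ^ (nat j + 1) * Tn n j"
proof (induction n arbitrary: j)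
  case 0
  then have "j = 0" by simp
  then show ?case using Tn_0[of 0] by simp
next
  case (Suc n)
  show ?case
  proof (cases "j = 0")
    case True then show ?thesis using Tn_0[of "Suc n"] by simp
  next
    case False
    then have j1: "0 \<le> j - 1" "j - 1 \<le> int n" using Suc.prems by auto
    have IH: "2 ^ n \<le> 2 ^ (nat (j - 1) + 1) * Tn n (j - 1)" using Suc.IH[OF j1] .
    have nn: "nat (j - 1) + 1 = nat j" using False Suc.prems by auto
    have "Tn n (j + 1) \<ge> 0" unfolding Tn_def by (intro sum_nonneg) auto
    then have "Tn (Suc n) j \<ge> Tn n (j - 1)" using Tn_Suc[of j n] Suc.prems by simp
    then have A: "2 ^ (nat j + 1) * Tn (Suc n) j \<ge> 2 * (2 ^ nat j * Tn n (j - 1))"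
      by (simp add: mult_left_mono)
    have B: "2 ^ nat j * Tn n (j - 1) \<ge> 2 ^ n" using IH by (simp flip: nn)
    have C: "2 ^ nat j * Tn n (j - 1) \<le> 2 ^ nat j * Tn (Suc n) j"
      using \<open>Tn (Suc n) j \<ge> Tn n (j - 1)\<close> by (intro mult_left_mono) auto
    show ?thesis using order_trans[OF B C] by simp
  qed
qed



definition gg :: "int \<Rightarrow> int \<Rightarrow> nat \<Rightarrow> int \<Rightarrow> real" where
  "gg zeta w m x = (if zeta + 1 - \<bar>x\<bar> \<le> int m * (w - 1) then (1/2) ^ (nat (zeta + 1 - \<bar>x\<bar>) + m + 1) else 0)"

definition ee :: "int \<Rightarrow> int \<Rightarrow> nat \<Rightarrow> int \<Rightarrow> int \<Rightarrow> nat \<Rightarrow> nat \<Rightarrow> real" where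
  "ee zeta w m s p n h = (if \<bar>s + p + 2 * int h - int n\<bar> \<le> zeta then gg zeta w m (s + p + 2 * int h - int n) else 1)"

definition bb :: "nat \<Rightarrow> nat \<Rightarrow> real" where
  "bb n h = real (n choose h) / 2 ^ n"

lemma gg_nonneg: "gg zeta w m x \<ge> 0" by (simp add: gg_def)
lemma gg_le1: "gg zeta w m x \<le> 1"
proof -
  have "((1::real)/2) ^ k \<le> 1" for k by (rule power_le_one) auto
  then show ?thesis unfolding gg_def by (auto simp del: power_Suc simp: power_add)
qed
lemma ee_nonneg: "ee zeta w m s p n h \<ge> 0" by (simp add: ee_def gg_nonneg)
lemma ee_le1: "ee zeta w m s p n h \<le> 1" by (simp add: ee_def gg_le1)
lemma bb_nonneg: "bb n h \<ge> 0" by (simp add: bb_def)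

lemma half_pow_mono: "a \<le> b \<Longrightarrow> ((1::real)/2) ^ b \<le> (1/2) ^ a"
  by (rule power_decreasing) auto

lemma upper:
  assumes s: "0 \<le> s" "s \<le> zeta" and p: "p \<in> {-1, 0, 1}" and w: "w > 1" and n: "int n \<ge> w"
  shows "gg zeta w (Suc m) s \<le> (\<Sum>h\<le>n. if int n < 2 * int h then bb n h * ee zeta w m s p n h else 0)"
    (is "_ \<le> ?U")
proof -
  define d where "d = zeta + 1 - s"
  have d1: "d \<ge> 1" using s by (simp add: d_def)
  have Unn: "\<And>h. 0 \<le> (if int n < 2 * int h then bb n h * ee zeta w m s p n h else 0)"
    using bb_nonneg ee_nonneg by simp
  show ?thesis
  proof (cases "d \<le> int (Suc m) * (w - 1)")
    case False
    then have "gg zeta w (Suc m) s = 0" using s by (simp add: gg_def d_def)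
    then show ?thesis using Unn by (simp add: sum_nonneg)
  next
    case dle: True
    have gS: "gg zeta w (Suc m) s = (1/2) ^ (nat d + m + 2)" using s dle by (simp add: gg_def d_def)
    show ?thesis
    proof (cases "int n \<le> d")
      case True
      have "n \<in> {..n}" by simp
      then have term_le: "(if int n < 2 * int n then bb n n * ee zeta w m s p n n else 0) \<le> ?U"
        using Unn by (intro member_le_sum) auto
      have n2: "int n \<ge> 2" using n w by simp
      have bbn: "bb n n = (1/2) ^ n" by (simp add: bb_def power_one_over)
      define D where "D = s + p + 2 * int n - int n"
      have D0: "D \<ge> s + int n - 1" using p by (auto simp: D_def)
      have "(1/2) ^ (nat d + m + 2) \<le> bb n n * ee zeta w m s p n n"
      proof (cases "\<bar>D\<bar> \<le> zeta")
        case False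
        then have "ee zeta w m s p n n = 1" by (simp add: ee_def D_def)
        moreover have "((1::real)/2) ^ (nat d + m + 2) \<le> (1/2) ^ n"
          using True d1 by (intro half_pow_mono) linarith
        ultimately show ?thesis using bbn by simp
      next
        case True
        have absD: "\<bar>D\<bar> = D" using D0 s n2 by simp
        define d' where "d' = zeta + 1 - D"
        have d'le: "d' \<le> d - int n + 1" using D0 by (simp add: d'_def d_def)
        have d'1: "d' \<ge> 1" using True absD by (simp add: d'_def)
        have d'm: "d' \<le> int m * (w - 1)" using d'le dle n by (simp add: algebra_simps)
        have "ee zeta w m s p n n = (1/2) ^ (nat d' + m + 1)"
          using True d'm absD by (simp add: ee_def gg_def D_def d'_def)
        then have "bb n n * ee zeta w m s p n n = (1/2) ^ (n + nat d' + m + 1)"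
          using bbn by (simp add: power_add)
        moreover have "((1::real)/2) ^ (nat d + m + 2) \<le> (1/2) ^ (n + nat d' + m + 1)"
          using d'le d'1 d1 by (intro half_pow_mono) linarith
        ultimately show ?thesis by simp
      qed
      then show ?thesis using term_le gS n2 by simp
    next
      case False
      have "?U \<ge> (\<Sum>h\<le>n. if int n + (d + 1) \<le> 2 * int h then bb n h else 0)"
      proof (intro sum_mono)
        fix h assume "h \<in> {..n}"
        show "(if int n + (d + 1) \<le> 2 * int h then bb n h else 0)
          \<le> (if int n < 2 * int h then bb n h * ee zeta w m s p n h else 0)"
        proof (cases "int n + (d + 1) \<le> 2 * int h")
          case True
          then have "\<not> \<bar>s + p + 2 * int h - int n\<bar> \<le> zeta" using p s by (auto simp: d_def)
          then have "ee zeta w m s p n h = 1" by (simp add: ee_def)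
          then show ?thesis using True d1 by simp
        qed (use Unn in auto)
      qed
      also have "(\<Sum>h\<le>n. if int n + (d + 1) \<le> 2 * int h then bb n h else 0) = Tn n (d + 1) / 2 ^ n"
        unfolding Tn_def bb_def sum_divide_distrib by (intro sum.cong refl) auto
      finally have U1: "?U \<ge> Tn n (d + 1) / 2 ^ n" .
      have "2 ^ n \<le> 2 ^ (nat (d + 1) + 1) * Tn n (d + 1)"
        using False d1 by (intro Tn_tail) auto
      then have "(1/2) ^ (nat (d + 1) + 1) \<le> Tn n (d + 1) / 2 ^ n"
        by (simp add: field_simps power_one_over)
      moreover have "((1::real)/2) ^ (nat d + m + 2) \<le> (1/2) ^ (nat (d + 1) + 1)"
        using d1 by (intro half_pow_mono) linarith
      ultimately show ?thesis using U1 gS by linarith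
    qed
  qed
qed



lemma gg_abs: "gg zeta w m (- x) = gg zeta w m x" by (simp add: gg_def)

lemma lower:
  assumes s: "s \<le> 0" "- s \<le> zeta" and p: "p \<in> {-1, 0, 1}" and w: "w > 1" and n: "int n \<ge> w"
  shows "gg zeta w (Suc m) s \<le> (\<Sum>h\<le>n. if 2 * int h < int n then bb n h * ee zeta w m s p n h else 0)"
proof -
  have "gg zeta w (Suc m) s = gg zeta w (Suc m) (- s)" by (simp add: gg_abs)
  also have "\<dots> \<le> (\<Sum>h\<le>n. if int n < 2 * int h then bb n h * ee zeta w m (- s) (- p) n h else 0)"
    using s p w n by (intro upper) auto
  also have "\<dots> = (\<Sum>h=0..n. if int n < 2 * int h then bb n h * ee zeta w m (- s) (- p) n h else 0)"
    by (simp add: atLeast0AtMost)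
  also have "\<dots> = (\<Sum>h=0..n. if int n < 2 * int (n + 0 - h) then bb n (n + 0 - h) * ee zeta w m (- s) (- p) n (n + 0 - h) else 0)"
    by (rule sum.atLeastAtMost_rev)
  also have "\<dots> = (\<Sum>h=0..n. if 2 * int h < int n then bb n h * ee zeta w m s p n h else 0)"
  proof (intro sum.cong refl)
    fix h assume h: "h \<in> {0..n}"
    have b: "bb n (n - h) = bb n h" using h by (simp add: bb_def binomial_symmetric[symmetric])
    have D: "- s + - p + 2 * int (n - h) - int n = - (s + p + 2 * int h - int n)" using h by (simp add: of_nat_diff)
    have e: "ee zeta w m (- s) (- p) n (n - h) = ee zeta w m s p n h"
      unfolding ee_def D abs_minus_cancel gg_abs ..
    show "(if int n < 2 * int (n + 0 - h) then bb n (n + 0 - h) * ee zeta w m (- s) (- p) n (n + 0 - h) else 0) =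
          (if 2 * int h < int n then bb n h * ee zeta w m s p n h else 0)"
      using h b e by (auto simp: of_nat_diff)
  qed
  also have "\<dots> = (\<Sum>h\<le>n. if 2 * int h < int n then bb n h * ee zeta w m s p n h else 0)"
    by (simp add: atLeast0AtMost)
  finally show ?thesis .
qed

lemma full:
  assumes s: "\<bar>s\<bar> \<le> zeta" and p: "p \<in> {-1, 0, 1}" and w: "w > 1" and n: "int n \<ge> w"
  shows "gg zeta w (Suc m) s \<le> (\<Sum>h\<le>n. bb n h * ee zeta w m s p n h)"
proof (cases "s \<ge> 0")
  case True
  have "gg zeta w (Suc m) s \<le> (\<Sum>h\<le>n. if int n < 2 * int h then bb n h * ee zeta w m s p n h else 0)"
    using True s p w n by (intro upper) auto
  also have "\<dots> \<le> (\<Sum>h\<le>n. bb n h * ee zeta w m s p n h)"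
    by (intro sum_mono) (auto intro: mult_nonneg_nonneg bb_nonneg ee_nonneg)
  finally show ?thesis .
next
  case False
  have "gg zeta w (Suc m) s \<le> (\<Sum>h\<le>n. if 2 * int h < int n then bb n h * ee zeta w m s p n h else 0)"
    using False s p w n by (intro lower) auto
  also have "\<dots> \<le> (\<Sum>h\<le>n. bb n h * ee zeta w m s p n h)"
    by (intro sum_mono) (auto intro: mult_nonneg_nonneg bb_nonneg ee_nonneg)
  finally show ?thesis .
qed

lemma full0:
  assumes z: "zeta \<ge> 0" and p: "p \<in> {-1, 0, 1}" and w: "w > 1" and n: "int n \<ge> w"
  shows "2 * gg zeta w (Suc m) 0 \<le> (\<Sum>h\<le>n. bb n h * ee zeta w m 0 p n h)"
proof -
  have "2 * gg zeta w (Suc m) 0 \<le> (\<Sum>h\<le>n. if int n < 2 * int h then bb n h * ee zeta w m 0 p n h else 0)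
     + (\<Sum>h\<le>n. if 2 * int h < int n then bb n h * ee zeta w m 0 p n h else 0)"
    using upper[of 0 zeta p w n m] lower[of 0 zeta p w n m] z p w n by simp
  also have "\<dots> = (\<Sum>h\<le>n. (if int n < 2 * int h then bb n h * ee zeta w m 0 p n h else 0)
     + (if 2 * int h < int n then bb n h * ee zeta w m 0 p n h else 0))"
    by (simp add: sum.distrib)
  also have "\<dots> \<le> (\<Sum>h\<le>n. bb n h * ee zeta w m 0 p n h)"
    by (intro sum_mono) (auto intro: mult_nonneg_nonneg bb_nonneg ee_nonneg)
  finally show ?thesis .
qed

lemma top:
  assumes s: "\<bar>s\<bar> \<le> zeta" and p: "p \<in> {-1, 0, 1}" and w: "w > 1" and n: "int n \<ge> w"
    and tau: "zeta + 1 \<le> int (Suc m) * (w - 1)"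
  shows "(1/2) ^ nat (w * int (Suc m)) \<le> (\<Sum>h\<le>n. bb n h * ee zeta w m s p n h)"
proof (cases "s = 0")
  case True
  have "gg zeta w (Suc m) 0 = (1/2) ^ (nat (zeta + 1) + Suc m + 1)"
    using tau s by (simp add: gg_def)
  moreover have "((1::real)/2) ^ nat (w * int (Suc m)) \<le> 2 * (1/2) ^ (nat (zeta + 1) + Suc m + 1)"
  proof -
    have "((1::real)/2) ^ nat (w * int (Suc m)) \<le> (1/2) ^ (nat (zeta + 1) + Suc m)"
      using tau s by (intro half_pow_mono) (simp add: algebra_simps nat_le_iff)
    then show ?thesis by simp
  qed
  ultimately show ?thesis using full0[of zeta p w n m] s p w n True by simp
next
  case False
  have "gg zeta w (Suc m) s = (1/2) ^ (nat (zeta + 1 - \<bar>s\<bar>) + Suc m + 1)"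
    using tau s False by (simp add: gg_def)
  moreover have "((1::real)/2) ^ nat (w * int (Suc m)) \<le> (1/2) ^ (nat (zeta + 1 - \<bar>s\<bar>) + Suc m + 1)"
    using tau s False by (intro half_pow_mono) (simp add: algebra_simps nat_le_iff)
  ultimately show ?thesis using full[of s zeta p w n m] s p w n by simp
qed



lemma absS_range:
  assumes "\<bar>s0\<bar> \<le> zeta"
  shows "absS zeta wk pol e s0 t x = Some s \<Longrightarrow> \<bar>s\<bar> \<le> zeta"
proof (induction t arbitrary: s)
  case 0 then show ?case using assms by simp
next
  case (Suc t)
  then show ?case by (auto simp: Let_def split: option.splits if_splits)
qed

lemma absS_cong:
  assumes "\<bar>s0\<bar> \<le> zeta"
    and "\<And>t' k. t' < t \<Longrightarrow> \<bar>k\<bar> \<le> zeta \<Longrightarrow> e1 t' k x = e2 t' k y"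
  shows "absS zeta wk pol e1 s0 t x = absS zeta wk pol e2 s0 t y"
  using assms(2)
proof (induction t)
  case 0 then show ?case by simp
next
  case (Suc t)
  have IH: "absS zeta wk pol e1 s0 t x = absS zeta wk pol e2 s0 t y" using Suc by auto
  show ?case
  proof (cases "absS zeta wk pol e1 s0 t x")
    case None then show ?thesis using IH by simp
  next
    case (Some s)
    have "\<bar>s\<bar> \<le> zeta" using absS_range[OF assms(1) Some] .
    then have "e1 t s x = e2 t s y" using Suc.prems by auto
    moreover have "absS zeta wk pol e2 s0 t y = Some s" using IH Some by simp
    ultimately show ?thesis using Some by (simp del: absS.simps(1) add: Let_def)
  qed
qed

lemma absS_add:
  "absS zeta wk pol e s0 (t + m) x = (case absS zeta wk pol e s0 t x of None \<Rightarrow> None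
     | Some s \<Rightarrow> absS zeta wk pol (\<lambda>t' k. e (t + t') k) s m x)"
proof (induction m)
  case 0 then show ?case by (cases "absS zeta wk pol e s0 t x") auto
next
  case (Suc m)
  show ?case
    by (cases "absS zeta wk pol e s0 t x") (simp_all add: Suc.IH)
qed

lemma Pi_all_sets:
  assumes "finite I" "A \<subseteq> space (PiM I (\<lambda>_. count_space (UNIV::nat set)))"
  shows "A \<in> sets (PiM I (\<lambda>_. count_space (UNIV::nat set)))"
proof -
  have sp: "space (PiM I (\<lambda>_. count_space (UNIV::nat set))) = PiE I (\<lambda>_. UNIV)"
    by (simp add: space_PiM)
  have cA: "countable A"
    using assms sp countable_PiE[of I "\<lambda>_. UNIV :: nat set"] countable_subset by auto
  have "A = (\<Union>f\<in>A. PiE I (\<lambda>i. {f i}))"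
  proof
    show "A \<subseteq> (\<Union>f\<in>A. PiE I (\<lambda>i. {f i}))"
    proof
      fix f assume "f \<in> A"
      then have "f \<in> PiE I (\<lambda>i. {f i})" using assms sp by (auto simp: PiE_def extensional_def)
      then show "f \<in> (\<Union>f\<in>A. PiE I (\<lambda>i. {f i}))" using \<open>f \<in> A\<close> by blast
    qed
  next
    show "(\<Union>f\<in>A. PiE I (\<lambda>i. {f i})) \<subseteq> A"
    proof
      fix g assume "g \<in> (\<Union>f\<in>A. PiE I (\<lambda>i. {f i}))"
      then obtain f where f: "f \<in> A" "g \<in> PiE I (\<lambda>i. {f i})" by blast
      have "f \<in> PiE I (\<lambda>_. UNIV)" using f assms sp by auto
      then have "g = f" using f(2) by (auto simp: PiE_def extensional_def fun_eq_iff)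
      then show "g \<in> A" using f by simp
    qed
  qed
  also have "\<dots> \<in> sets (PiM I (\<lambda>_. count_space (UNIV::nat set)))"
    using cA assms(1) by (intro sets.countable_UN'' sets_PiM_I_finite) auto
  finally show ?thesis .
qed



locale absys = prob_space M for M :: "'a measure" +
  fixes zeta w :: int and wk pol :: "int \<Rightarrow> int" and eta :: "nat \<Rightarrow> int \<Rightarrow> 'a \<Rightarrow> nat"
  assumes zeta: "zeta > 0" and w: "w > 1" and wk: "\<forall>k. wk k \<ge> w" and pol: "\<forall>k. pol k \<in> {-1, 0, 1}"
    and ind: "indep_vars (\<lambda>_. count_space UNIV) (\<lambda>(t, k). eta t k) (UNIV :: (nat \<times> int) set)"
    and dis: "\<forall>t k. distr M (count_space UNIV) (eta t k) = measure_pmf (binomial_pmf (nat (wk k)) (1/2))"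
begin

abbreviation S where "S c s m \<omega> \<equiv> absS zeta wk pol (\<lambda>t k. eta (c + t) k) s m \<omega>"

definition R :: "(nat \<times> int) set \<Rightarrow> 'a \<Rightarrow> (nat \<times> int \<Rightarrow> nat)" where
  "R I = (\<lambda>\<omega>. restrict (\<lambda>i. (\<lambda>(t, k). eta t k) i \<omega>) I)"

definition Ic :: "nat \<Rightarrow> nat \<Rightarrow> (nat \<times> int) set" where
  "Ic c m = {c..<c+m} \<times> {-zeta..zeta}"

abbreviation PI where "PI I \<equiv> PiM I (\<lambda>_. count_space (UNIV::nat set))"

lemma rv: "(\<lambda>(t, k). eta t k) i \<in> measurable M (count_space UNIV)"
  using ind unfolding indep_vars_def2 by (cases i) auto

lemma eta_meas: "eta t k \<in> measurable M (count_space UNIV)"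
  using rv[of "(t,k)"] by simp

lemma R_meas: "R I \<in> measurable M (PI I)"
  unfolding R_def by (intro measurable_restrict rv)

lemma finite_Ic: "finite (Ic c m)" by (simp add: Ic_def)

lemma rep:
  assumes "\<bar>s\<bar> \<le> zeta"
  shows "S c s m \<omega> = absS zeta wk pol (\<lambda>t k f. f (c + t, k)) s m (R (Ic c m) \<omega>)"
  by (rule absS_cong[OF assms]) (auto simp: R_def Ic_def)

lemma ev_eq:
  assumes "\<bar>s\<bar> \<le> zeta"
  shows "{\<omega> \<in> space M. Q (S c s m \<omega>)} =
     R (Ic c m) -` {f \<in> space (PI (Ic c m)). Q (absS zeta wk pol (\<lambda>t k f. f (c + t, k)) s m f)} \<inter> space M"
  using rep[OF assms] measurable_space[OF R_meas] by auto

lemma ev_sets: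
  assumes "\<bar>s\<bar> \<le> zeta"
  shows "{\<omega> \<in> space M. Q (S c s m \<omega>)} \<in> events"
  unfolding ev_eq[OF assms] by (intro measurable_sets[OF R_meas] Pi_all_sets finite_Ic) auto

lemma indep2:
  assumes "I1 \<inter> I2 = {}" "A1 \<in> sets (PI I1)" "A2 \<in> sets (PI I2)"
  shows "prob ((R I1 -` A1 \<inter> space M) \<inter> (R I2 -` A2 \<inter> space M))
       = prob (R I1 -` A1 \<inter> space M) * prob (R I2 -` A2 \<inter> space M)"
proof -
  let ?K = "\<lambda>b::bool. if b then I1 else I2"
  have iv: "indep_vars (\<lambda>b. PI (?K b)) (\<lambda>b \<omega>. restrict (\<lambda>i. (\<lambda>(t, k). eta t k) i \<omega>) (?K b)) UNIV"
    using assms(1) by (intro indep_vars_restrict[OF ind]) (auto simp: disjoint_family_on_def)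
  let ?A = "\<lambda>b::bool. if b then A1 else A2"
  have "prob (\<Inter>b\<in>UNIV. (\<lambda>\<omega>. restrict (\<lambda>i. (\<lambda>(t, k). eta t k) i \<omega>) (?K b)) -` ?A b \<inter> space M)
     = (\<Prod>b\<in>UNIV. prob ((\<lambda>\<omega>. restrict (\<lambda>i. (\<lambda>(t, k). eta t k) i \<omega>) (?K b)) -` ?A b \<inter> space M))"
    using assms by (intro indep_varsD[OF iv]) auto
  then show ?thesis by (simp add: UNIV_bool R_def Int_commute mult.commute)
qed

lemma S_add: "S c s0 (t + m) \<omega> = (case S c s0 t \<omega> of None \<Rightarrow> None | Some s \<Rightarrow> S (c + t) s m \<omega>)"
proof -
  have e: "(\<lambda>t' k. (\<lambda>t k. eta (c + t) k) (t + t') k) = (\<lambda>t' k. eta (c + t + t') k)"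
    by (simp add: add.assoc)
  show ?thesis using absS_add[of zeta wk pol "\<lambda>t k. eta (c + t) k" s0 t m \<omega>] unfolding e .
qed

lemma decomp:
  assumes s0: "\<bar>s0\<bar> \<le> zeta"
  shows "prob {\<omega> \<in> space M. S c s0 (t + m) \<omega> \<noteq> None} =
    (\<Sum>s\<in>{-zeta..zeta}. prob {\<omega> \<in> space M. S c s0 t \<omega> = Some s} * prob {\<omega> \<in> space M. S (c + t) s m \<omega> \<noteq> None})"
proof -
  let ?E1 = "\<lambda>s. {\<omega> \<in> space M. S c s0 t \<omega> = Some s}"
  let ?E2 = "\<lambda>s. {\<omega> \<in> space M. S (c + t) s m \<omega> \<noteq> None}"
  have eq: "{\<omega> \<in> space M. S c s0 (t + m) \<omega> \<noteq> None} = (\<Union>s\<in>{-zeta..zeta}. ?E1 s \<inter> ?E2 s)"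
  proof (intro set_eqI iffI)
    fix \<omega> assume a: "\<omega> \<in> {\<omega> \<in> space M. S c s0 (t + m) \<omega> \<noteq> None}"
    then obtain s where Ss: "S c s0 t \<omega> = Some s" unfolding S_add by (auto split: option.splits)
    then have "\<bar>s\<bar> \<le> zeta" using absS_range[OF s0 Ss] by blast
    then show "\<omega> \<in> (\<Union>s\<in>{-zeta..zeta}. ?E1 s \<inter> ?E2 s)" using a Ss unfolding S_add by auto
  next
    fix \<omega> assume "\<omega> \<in> (\<Union>s\<in>{-zeta..zeta}. ?E1 s \<inter> ?E2 s)"
    then show "\<omega> \<in> {\<omega> \<in> space M. S c s0 (t + m) \<omega> \<noteq> None}" unfolding S_add by auto
  qed
  have meas: "?E1 s \<inter> ?E2 s \<in> events" if "s \<in> {-zeta..zeta}" for s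
    using that s0 by (intro sets.Int ev_sets) auto
  have "prob {\<omega> \<in> space M. S c s0 (t + m) \<omega> \<noteq> None} = (\<Sum>s\<in>{-zeta..zeta}. prob (?E1 s \<inter> ?E2 s))"
    unfolding eq using meas by (intro finite_measure_finite_Union) (auto simp: disjoint_family_on_def)
  also have "\<dots> = (\<Sum>s\<in>{-zeta..zeta}. prob (?E1 s) * prob (?E2 s))"
  proof (intro sum.cong refl)
    fix s assume "s \<in> {-zeta..zeta}"
    then have sa: "\<bar>s\<bar> \<le> zeta" by auto
    have d: "Ic c t \<inter> Ic (c + t) m = {}" by (auto simp: Ic_def)
    have e1: "?E1 s = R (Ic c t) -` {f \<in> space (PI (Ic c t)). absS zeta wk pol (\<lambda>t k f. f (c + t, k)) s0 t f = Some s} \<inter> space M"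
      using ev_eq[OF s0, of "\<lambda>x. x = Some s" c t] by simp
    have e2: "?E2 s = R (Ic (c + t) m) -` {f \<in> space (PI (Ic (c + t) m)). absS zeta wk pol (\<lambda>t' k f. f (c + t + t', k)) s m f \<noteq> None} \<inter> space M"
      using ev_eq[OF sa, of "\<lambda>x. x \<noteq> None" "c + t" m] by simp
    show "prob (?E1 s \<inter> ?E2 s) = prob (?E1 s) * prob (?E2 s)"
      unfolding e1 e2
      by (intro indep2[OF d] Pi_all_sets finite_Ic) auto
  qed
  finally show ?thesis .
qed

end



context absys
begin

lemma P1:
  assumes s: "\<bar>s\<bar> \<le> zeta" and s': "\<bar>s'\<bar> \<le> zeta"
  shows "prob {\<omega> \<in> space M. S c s 1 \<omega> = Some s'} =
    (\<Sum>h\<le>nat (wk s). if s + pol s + 2 * int h - int (nat (wk s)) = s' then bb (nat (wk s)) h else 0)"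
proof -
  define n where "n = nat (wk s)"
  have wn: "wk s = int n" using wk w by (simp add: n_def) (smt (verit))
  let ?A = "{h. s + pol s + 2 * int h - int n = s'}"
  have "{\<omega> \<in> space M. S c s 1 \<omega> = Some s'} = eta c s -` ?A \<inter> space M"
    using s s' wn by (auto simp: Let_def)
  then have "prob {\<omega> \<in> space M. S c s 1 \<omega> = Some s'} = measure (distr M (count_space UNIV) (eta c s)) ?A"
    by (simp add: measure_distr[OF eta_meas])
  also have "\<dots> = measure (measure_pmf (binomial_pmf n (1/2))) ?A"
    using dis by (simp add: n_def)
  also have "\<dots> = measure (measure_pmf (binomial_pmf n (1/2))) (?A \<inter> set_pmf (binomial_pmf n (1/2)))"
    using measure_Int_set_pmf[of "binomial_pmf n (1/2)" ?A] by simp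
  also have "\<dots> = (\<Sum>h \<in> ?A \<inter> {..n}. pmf (binomial_pmf n (1/2)) h)"
    by (simp add: measure_measure_pmf_finite)
  also have "\<dots> = (\<Sum>h \<in> {h \<in> {..n}. s + pol s + 2 * int h - int n = s'}. bb n h)"
  proof (intro sum.cong)
    show "?A \<inter> {..n} = {h \<in> {..n}. s + pol s + 2 * int h - int n = s'}" by auto
  next
    fix h assume "h \<in> {h \<in> {..n}. s + pol s + 2 * int h - int n = s'}"
    then have "h \<le> n" by simp
    then have "(1/2::real) ^ h * (1 - 1/2) ^ (n - h) = (1/2) ^ n"
      by (simp flip: power_add)
    then show "pmf (binomial_pmf n (1/2)) h = bb n h"
      by (simp add: bb_def power_one_over)
  qed
  also have "\<dots> = (\<Sum>h\<le>n. if s + pol s + 2 * int h - int n = s' then bb n h else 0)"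
    by (rule sum.inter_filter) simp
  finally show ?thesis by (simp only: n_def)
qed

lemma bb_sum: "(\<Sum>h\<le>n. bb n h) = 1"
proof -
  have "(\<Sum>h\<le>n. (n choose h)) = 2 ^ n" using choose_row_sum by simp
  then have "real (\<Sum>h\<le>n. (n choose h)) = 2 ^ n" by simp
  then have "(\<Sum>h\<le>n. real (n choose h)) = 2 ^ n" by (simp only: of_nat_sum)
  then show ?thesis by (simp add: bb_def flip: sum_divide_distrib)
qed

lemma step:
  assumes s: "\<bar>s\<bar> \<le> zeta"
    and IH: "\<And>c' s'. \<bar>s'\<bar> \<le> zeta \<Longrightarrow> prob {\<omega> \<in> space M. S c' s' m \<omega> \<noteq> None} \<le> 1 - G s'"
  shows "prob {\<omega> \<in> space M. S c s (1 + m) \<omega> \<noteq> None} \<le>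
    1 - (\<Sum>h\<le>nat (wk s). bb (nat (wk s)) h *
       (if \<bar>s + pol s + 2 * int h - int (nat (wk s))\<bar> \<le> zeta then G (s + pol s + 2 * int h - int (nat (wk s))) else 1))"
proof -
  define n where "n = nat (wk s)"
  define D where "D h = s + pol s + 2 * int h - int n" for h
  let ?K = "{-zeta..zeta}"
  have "prob {\<omega> \<in> space M. S c s (1 + m) \<omega> \<noteq> None} =
    (\<Sum>s'\<in>?K. prob {\<omega> \<in> space M. S c s 1 \<omega> = Some s'} * prob {\<omega> \<in> space M. S (c + 1) s' m \<omega> \<noteq> None})"
    by (rule decomp[OF s])
  also have "\<dots> \<le> (\<Sum>s'\<in>?K. prob {\<omega> \<in> space M. S c s 1 \<omega> = Some s'} * (1 - G s'))"
  proof (intro sum_mono mult_left_mono)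
    fix s' assume "s' \<in> ?K"
    then show "prob {\<omega> \<in> space M. S (c + 1) s' m \<omega> \<noteq> None} \<le> 1 - G s'" by (intro IH) auto
  qed simp
  also have "\<dots> = (\<Sum>s'\<in>?K. \<Sum>h\<le>n. if D h = s' then bb n h * (1 - G s') else 0)"
  proof (intro sum.cong refl)
    fix s' assume "s' \<in> ?K"
    then have s'z: "\<bar>s'\<bar> \<le> zeta" by auto
    show "prob {\<omega> \<in> space M. S c s 1 \<omega> = Some s'} * (1 - G s') = (\<Sum>h\<le>n. if D h = s' then bb n h * (1 - G s') else 0)"
      unfolding P1[OF s s'z] sum_distrib_right D_def n_def by (intro sum.cong refl) auto
  qed
  also have "\<dots> = (\<Sum>h\<le>n. \<Sum>s'\<in>?K. if D h = s' then bb n h * (1 - G s') else 0)"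
    by (rule sum.swap)
  also have "\<dots> = (\<Sum>h\<le>n. if D h \<in> ?K then bb n h * (1 - G (D h)) else 0)"
    by (intro sum.cong refl) (simp add: sum.delta)
  also have "\<dots> = (\<Sum>h\<le>n. bb n h) - (\<Sum>h\<le>n. bb n h * (if \<bar>D h\<bar> \<le> zeta then G (D h) else 1))"
    unfolding sum_subtractf[symmetric] by (intro sum.cong refl) (auto simp: algebra_simps)
  finally show ?thesis by (simp only: bb_sum D_def n_def)
qed

lemma core: "\<bar>s\<bar> \<le> zeta \<Longrightarrow> prob {\<omega> \<in> space M. S c s m \<omega> \<noteq> None} \<le> 1 - gg zeta w m s"
proof (induction m arbitrary: c s)
  case 0
  have "gg zeta w 0 s = 0" using 0 by (simp add: gg_def)
  then show ?case by simp
next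
  case (Suc m)
  have n: "int (nat (wk s)) \<ge> w" using wk w by (smt (verit) int_nat_eq)
  have "prob {\<omega> \<in> space M. S c s (1 + m) \<omega> \<noteq> None} \<le>
    1 - (\<Sum>h\<le>nat (wk s). bb (nat (wk s)) h * ee zeta w m s (pol s) (nat (wk s)) h)"
    unfolding ee_def by (rule step[OF Suc.prems Suc.IH])
  moreover have "gg zeta w (Suc m) s \<le> (\<Sum>h\<le>nat (wk s). bb (nat (wk s)) h * ee zeta w m s (pol s) (nat (wk s)) h)"
    using Suc.prems pol w n by (intro full) auto
  ultimately show ?case by simp
qed

lemma blk:
  assumes s: "\<bar>s\<bar> \<le> zeta" and tau: "zeta + 1 \<le> int (Suc m) * (w - 1)"
  shows "prob {\<omega> \<in> space M. S c s (Suc m) \<omega> \<noteq> None} \<le> 1 - (1/2) ^ nat (w * int (Suc m))"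
proof -
  have n: "int (nat (wk s)) \<ge> w" using wk w by (smt (verit) int_nat_eq)
  have "prob {\<omega> \<in> space M. S c s (1 + m) \<omega> \<noteq> None} \<le>
    1 - (\<Sum>h\<le>nat (wk s). bb (nat (wk s)) h * ee zeta w m s (pol s) (nat (wk s)) h)"
    unfolding ee_def by (rule step[OF s core])
  moreover have "(1/2) ^ nat (w * int (Suc m)) \<le> (\<Sum>h\<le>nat (wk s). bb (nat (wk s)) h * ee zeta w m s (pol s) (nat (wk s)) h)"
    using s pol w n tau by (intro top) auto
  ultimately show ?thesis by simp
qed

lemma total:
  assumes s0: "\<bar>s0\<bar> \<le> zeta"
  shows "prob {\<omega> \<in> space M. S c s0 t \<omega> \<noteq> None} = (\<Sum>s\<in>{-zeta..zeta}. prob {\<omega> \<in> space M. S c s0 t \<omega> = Some s})"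
proof -
  have "prob {\<omega> \<in> space M. S c s0 (t + 0) \<omega> \<noteq> None} =
    (\<Sum>s\<in>{-zeta..zeta}. prob {\<omega> \<in> space M. S c s0 t \<omega> = Some s} * prob {\<omega> \<in> space M. S (c + t) s 0 \<omega> \<noteq> None})"
    by (rule decomp[OF s0])
  then show ?thesis by (simp add: prob_space)
qed

lemma decay:
  assumes s0: "\<bar>s0\<bar> \<le> zeta" and tau: "zeta + 1 \<le> int (Suc m) * (w - 1)"
  shows "prob {\<omega> \<in> space M. S c s0 (t + Suc m) \<omega> \<noteq> None} \<le>
     (1 - (1/2) ^ nat (w * int (Suc m))) * prob {\<omega> \<in> space M. S c s0 t \<omega> \<noteq> None}"
proof -
  let ?r = "1 - (1/2::real) ^ nat (w * int (Suc m))"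
  have "prob {\<omega> \<in> space M. S c s0 (t + Suc m) \<omega> \<noteq> None} =
    (\<Sum>s\<in>{-zeta..zeta}. prob {\<omega> \<in> space M. S c s0 t \<omega> = Some s} * prob {\<omega> \<in> space M. S (c + t) s (Suc m) \<omega> \<noteq> None})"
    by (rule decomp[OF s0])
  also have "\<dots> \<le> (\<Sum>s\<in>{-zeta..zeta}. prob {\<omega> \<in> space M. S c s0 t \<omega> = Some s} * ?r)"
    using blk[OF _ tau] by (intro sum_mono mult_left_mono) auto
  also have "\<dots> = ?r * prob {\<omega> \<in> space M. S c s0 t \<omega> \<noteq> None}"
    unfolding total[OF s0] by (simp add: sum_distrib_left mult.commute)
  finally show ?thesis .
qed

lemma pow:
  assumes s0: "\<bar>s0\<bar> \<le> zeta" and tau: "zeta + 1 \<le> int (Suc m) * (w - 1)"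
  shows "prob {\<omega> \<in> space M. S c s0 (k * Suc m + r) \<omega> \<noteq> None} \<le> (1 - (1/2) ^ nat (w * int (Suc m))) ^ k"
proof (induction k)
  case 0 then show ?case by simp
next
  case (Suc k)
  let ?r = "1 - (1/2::real) ^ nat (w * int (Suc m))"
  have r0: "?r \<ge> 0"
  proof -
    have "((1::real)/2) ^ nat (w * int (Suc m)) \<le> 1" by (rule power_le_one) auto
    then show ?thesis by simp
  qed
  have eq: "Suc k * Suc m + r = (k * Suc m + r) + Suc m" by simp
  have "prob {\<omega> \<in> space M. S c s0 (Suc k * Suc m + r) \<omega> \<noteq> None} \<le>
     ?r * prob {\<omega> \<in> space M. S c s0 (k * Suc m + r) \<omega> \<noteq> None}"
    unfolding eq by (rule decay[OF s0 tau])
  also have "\<dots> \<le> ?r * ?r ^ k" using Suc.IH r0 by (intro mult_left_mono) auto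
  finally show ?case by simp
qed

end



theorem lemma4:
  fixes M :: "'a measure"
    and zeta w :: int
    and wk pol :: "int \<Rightarrow> int"
    and eta :: "nat \<Rightarrow> int \<Rightarrow> 'a \<Rightarrow> nat"
  assumes "prob_space M"
    and "zeta > 0"
    and "w > 1"
    and "\<forall>k. wk k \<ge> w"
    and "\<forall>k. pol k \<in> {-1, 0, 1}"
    and "prob_space.indep_vars M (\<lambda>_. count_space UNIV) (\<lambda>(t, k). eta t k) (UNIV :: (nat \<times> int) set)"
    and "\<forall>t k. distr M (count_space UNIV) (eta t k) = measure_pmf (binomial_pmf (nat (wk k)) (1/2))"
  shows "let tau = zeta div (w - 1) + 1 in
         \<exists>C > 0. \<forall>\<sigma> :: real. \<sigma> > (1 - 2 powr (- real_of_int (w * tau))) powr (1 / real_of_int tau) \<longrightarrow>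
           (\<forall>t :: nat. \<forall>s0 :: int. \<bar>s0\<bar> \<le> zeta \<longrightarrow>
              measure M {\<omega> \<in> space M. absS zeta wk pol eta s0 t \<omega> \<noteq> None} \<le> C * \<sigma> ^ t)"
proof -
  interpret absys M zeta w wk pol eta
    using assms unfolding absys_def absys_axioms_def by blast
  define tau where "tau = zeta div (w - 1) + 1"
  define m where "m = nat (zeta div (w - 1))"
  have zd: "zeta div (w - 1) \<ge> 0" using assms(2,3) by (simp add: pos_imp_zdiv_nonneg_iff)
  have taum: "tau = int (Suc m)" using zd by (simp add: tau_def m_def)
  have tau: "zeta + 1 \<le> int (Suc m) * (w - 1)"
  proof -
    have "zeta = zeta div (w - 1) * (w - 1) + zeta mod (w - 1)" by (rule div_mult_mod_eq[symmetric])
    moreover have "zeta mod (w - 1) < w - 1" using assms(3) by simp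
    ultimately show ?thesis using zd unfolding m_def by (simp add: algebra_simps)
  qed
  define N where "N = nat (w * int (Suc m))"
  have N1: "N \<ge> 1"
  proof -
    have "w * int (Suc m) \<ge> 1 * 1" using assms(3) by (intro mult_mono) auto
    then show ?thesis by (simp add: N_def)
  qed
  define \<rho> where "\<rho> = 1 - (1/2::real) ^ N"
  have hN: "(1/2::real) ^ N < 1" using N1 by (simp add: power_less_one_iff)
  have \<rho>0: "\<rho> > 0" using hN by (simp add: \<rho>_def)
  have \<rho>1: "\<rho> \<le> 1" by (simp add: \<rho>_def)
  have pw: "2 powr (- real_of_int (w * tau)) = (1/2::real) ^ N"
  proof -
    have "real_of_int (w * tau) = real N" using assms(3) taum by (simp add: N_def)
    then show ?thesis by (simp add: powr_minus powr_realpow power_one_over inverse_eq_divide)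
  qed
  have eqS: "(\<lambda>t k. eta (0 + t) k) = eta" by simp
  have P: "measure M {\<omega> \<in> space M. absS zeta wk pol eta s0 t \<omega> \<noteq> None} \<le> \<rho> ^ (t div Suc m)"
    if "\<bar>s0\<bar> \<le> zeta" for s0 t
  proof -
    have e: "(t div Suc m) * Suc m + t mod Suc m = t" by (rule div_mult_mod_eq)
    have "measure M {\<omega> \<in> space M. S 0 s0 ((t div Suc m) * Suc m + t mod Suc m) \<omega> \<noteq> None} \<le> \<rho> ^ (t div Suc m)"
      unfolding \<rho>_def N_def by (rule pow[OF that tau])
    then show ?thesis unfolding e eqS .
  qed
  have "\<exists>C > 0. \<forall>\<sigma> :: real. \<sigma> > (1 - 2 powr (- real_of_int (w * tau))) powr (1 / real_of_int tau) \<longrightarrow>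
           (\<forall>t :: nat. \<forall>s0 :: int. \<bar>s0\<bar> \<le> zeta \<longrightarrow>
              measure M {\<omega> \<in> space M. absS zeta wk pol eta s0 t \<omega> \<noteq> None} \<le> C * \<sigma> ^ t)"
  proof (intro exI[of _ "1 / \<rho>"] conjI allI impI)
    show "0 < 1 / \<rho>" using \<rho>0 by simp
  next
    fix \<sigma> :: real and t :: nat and s0 :: int
    assume \<sigma>: "(1 - 2 powr (- real_of_int (w * tau))) powr (1 / real_of_int tau) < \<sigma>"
      and s0: "\<bar>s0\<bar> \<le> zeta"
    define T where "T = Suc m"
    have \<sigma>': "\<rho> powr (1 / real T) < \<sigma>" using \<sigma>[unfolded pw, unfolded taum] unfolding T_def \<rho>_def by simp
    have "\<rho> powr (1 / real T) > 0" using \<rho>0 by simp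
    then have \<sigma>0: "\<sigma> > 0" using \<sigma>' by linarith
    have \<sigma>T: "\<rho> < \<sigma> ^ T"
    proof -
      have "(\<rho> powr (1 / real T)) ^ T = \<rho>"
      proof -
        have "(\<rho> powr (1 / real T)) ^ T = (\<rho> powr (1 / real T)) powr real T"
          using \<rho>0 by (simp add: powr_realpow)
        also have "\<dots> = \<rho> powr (1 / real T * real T)" by (simp add: powr_powr)
        also have "\<dots> = \<rho>" using \<rho>0 by (simp add: T_def)
        finally show ?thesis .
      qed
      moreover have "(\<rho> powr (1 / real T)) ^ T < \<sigma> ^ T"
        using \<sigma>' \<rho>0 by (intro power_strict_mono) (auto simp: T_def)
      ultimately show ?thesis by simp
    qed
    define k where "k = t div T"
    define r where "r = t mod T"
    have tkr: "t = k * T + r" by (simp add: k_def r_def)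
    have rT: "r < T" by (simp add: r_def T_def)
    have Pt: "measure M {\<omega> \<in> space M. absS zeta wk pol eta s0 t \<omega> \<noteq> None} \<le> \<rho> ^ k"
      using P[OF s0, of t] by (simp add: k_def T_def)
    show "measure M {\<omega> \<in> space M. absS zeta wk pol eta s0 t \<omega> \<noteq> None} \<le> 1 / \<rho> * \<sigma> ^ t"
    proof (cases "\<sigma> \<ge> 1")
      case True
      have "1 \<le> 1 / \<rho>" using \<rho>0 \<rho>1 by simp
      moreover have "1 \<le> \<sigma> ^ t" using True by (rule one_le_power)
      ultimately have "1 \<le> 1 / \<rho> * \<sigma> ^ t" by (metis mult_mono' mult_1 zero_le_one)
      moreover have "measure M {\<omega> \<in> space M. absS zeta wk pol eta s0 t \<omega> \<noteq> None} \<le> 1" by simp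
      ultimately show ?thesis by linarith
    next
      case False
      have "\<sigma> ^ T \<le> \<sigma> ^ r" using False \<sigma>0 rT by (intro power_decreasing) auto
      then have r\<rho>: "\<rho> \<le> \<sigma> ^ r" using \<sigma>T by simp
      have k\<rho>: "\<rho> ^ k \<le> (\<sigma> ^ T) ^ k" using \<sigma>T \<rho>0 by (intro power_mono) auto
      have "\<rho> ^ k * \<rho> \<le> (\<sigma> ^ T) ^ k * \<sigma> ^ r"
        using k\<rho> r\<rho> \<rho>0 \<sigma>0 by (intro mult_mono) auto
      also have "\<dots> = \<sigma> ^ t" by (simp add: tkr power_add power_mult mult.commute)
      finally have "\<rho> ^ k \<le> 1 / \<rho> * \<sigma> ^ t" using \<rho>0 by (simp add: field_simps)
      then show ?thesis using Pt by linarith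
    qed
  qed
  then show ?thesis unfolding tau_def Let_def .
qed


end
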